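(* Let $(Q,\rightarrow)$ be a finite transition system and $\mathscr{R}$ a preorder on $Q$. Among all equivalence relations $\mathscr{P}$ on $Q$ with $\mathscr{P}\subseteq\mathscr{R}$ and $\mathscr{P}\circ\rightarrow^{-1}\subseteq\rightarrow^{-1}\circ\mathscr{R}$ (the $\mathscr{R}$-stable equivalence relations), there is a coarsest one, i.e. one containing all the others.
   Context: For relations on $Q$: $\mathscr{R}^{-1}=\{(y,x)\mid(x,y)\in\mathscr{R}\}$, $\mathscr{R}(X)=\{q'\mid\exists q\in X,\ q\,\mathscr{R}\,q'\}$, and $\mathscr{S}\circ\mathscr{R}=\{(x,y)\mid y\in\mathscr{S}(\mathscr{R}(x))\}$. A preorder is a reflexive transitive relation. A relation is coarser than another if it contains it. *)

theory Defs
  imports Main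
begin

text \<open>Paper's composition: S \<circ> R = {(x,y). y \<in> S(R(x))}, i.e. first R then S,
  which is Isabelle's relcomp R O S.  So P \<circ> T^-1 = T^-1 O P and
  T^-1 \<circ> R = R O T^-1.\<close>

definition R_stable :: "('q \<times> 'q) set \<Rightarrow> ('q \<times> 'q) set \<Rightarrow> ('q \<times> 'q) set \<Rightarrow> bool" where
  "R_stable T R P \<longleftrightarrow> equiv UNIV P \<and> P \<subseteq> R \<and> (T\<inverse> O P) \<subseteq> (R O T\<inverse>)"

end

theory Submission
  imports Defs
begin

theorem proposition2:
  fixes T :: "('q::finite \<times> 'q) set" and R :: "('q \<times> 'q) set"
  assumes "refl R" and "trans R"
  shows "\<exists>P. R_stable T R P \<and> (\<forall>P'. R_stable T R P' \<longrightarrow> P' \<subseteq> P)"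
proof -
  define U where "U = \<Union>{P. R_stable T R P}"
  have symU: "sym U" unfolding U_def R_stable_def sym_def equiv_def by blast
  have UR: "U \<subseteq> R" unfolding U_def R_stable_def by blast
  have Ust: "\<And>z y x. (z,y) \<in> U \<Longrightarrow> (z,x) \<in> T \<Longrightarrow> \<exists>w. (x,w) \<in> R \<and> (y,w) \<in> T"
  proof -
    fix z y x assume "(z,y) \<in> U" "(z,x) \<in> T"
    then obtain P where P: "R_stable T R P" "(z,y) \<in> P" unfolding U_def by blast
    hence "(x,y) \<in> T\<inverse> O P" using \<open>(z,x) \<in> T\<close> by blast
    hence "(x,y) \<in> R O T\<inverse>" using P(1) unfolding R_stable_def by blast
    thus "\<exists>w. (x,w) \<in> R \<and> (y,w) \<in> T" by blast
  qed
  have st: "(z,y) \<in> U\<^sup>* \<Longrightarrow> \<forall>x. (z,x) \<in> T \<longrightarrow> (\<exists>w. (x,w) \<in> R \<and> (y,w) \<in> T)" for z y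
  proof (induction rule: rtrancl_induct)
    case base
    then show ?case using assms(1) by (auto simp: refl_on_def)
  next
    case (step y' y)
    show ?case
    proof (intro allI impI)
      fix x assume "(z,x) \<in> T"
      then obtain w1 where "(x,w1) \<in> R" "(y',w1) \<in> T" using step.IH by blast
      then obtain w where "(w1,w) \<in> R" "(y,w) \<in> T" using Ust[OF step.hyps(2)] by blast
      thus "\<exists>w. (x,w) \<in> R \<and> (y,w) \<in> T" using \<open>(x,w1) \<in> R\<close> assms(2)
        unfolding trans_def by blast
    qed
  qed
  have "R_stable T R (U\<^sup>*)"
    unfolding R_stable_def
  proof (intro conjI)
    show "equiv UNIV (U\<^sup>*)"
      by (simp add: equiv_def refl_rtrancl trans_rtrancl sym_rtrancl symU)
    show "U\<^sup>* \<subseteq> R"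
    proof
      fix p assume "p \<in> U\<^sup>*"
      then obtain a b where ab: "p = (a,b)" "(a,b) \<in> U\<^sup>*" by (cases p) auto
      from ab(2) have "(a,b) \<in> R"
        by (induction rule: rtrancl_induct)
           (use assms UR in \<open>auto simp: refl_on_def trans_def\<close>)
      thus "p \<in> R" using ab by simp
    qed
    show "T\<inverse> O U\<^sup>* \<subseteq> R O T\<inverse>"
    proof
      fix p assume "p \<in> T\<inverse> O U\<^sup>*"
      then obtain x y z where "p = (x,y)" "(z,x) \<in> T" "(z,y) \<in> U\<^sup>*" by blast
      thus "p \<in> R O T\<inverse>" using st by blast
    qed
  qed
  moreover have "\<forall>P'. R_stable T R P' \<longrightarrow> P' \<subseteq> U\<^sup>*"
    unfolding U_def by blast
  ultimately show ?thesis by blast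
qed

end
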